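(* Let $\delta\in\mathbb{F}_{5^8}^*$ with $\delta\neq\pm1$ and multiplicative order of $\delta$ dividing $4$. Then $S(x)=x^5+\delta x^{5^5}\in\mathbb{F}_{5^8}[x]$ is a scattered polynomial of index $0$ over $\mathbb{F}_{5^8}$ (with $q=5$).
   Context: An $\mathbb{F}_q$-linearized polynomial $S\in\mathbb{F}_{q^n}[x]$ is a scattered polynomial of index $t$ over $\mathbb{F}_{q^n}$ if for all $y,z\in\mathbb{F}_{q^n}^*$, $\frac{S(y)}{y^{q^t}}=\frac{S(z)}{z^{q^t}}$ implies $y/z\in\mathbb{F}_q$. *)

theory Defs
  imports "HOL-Computational_Algebra.Polynomial"
begin

definition subfield_Fq :: "nat \<Rightarrow> 'a::field set" where
  "subfield_Fq q = {a. a ^ q = a}"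

definition linearized :: "nat \<Rightarrow> 'a::field poly \<Rightarrow> bool" where
  "linearized q S \<longleftrightarrow> (\<forall>k. coeff S k \<noteq> 0 \<longrightarrow> (\<exists>i. k = q ^ i))"

definition scattered :: "nat \<Rightarrow> nat \<Rightarrow> 'a::field poly \<Rightarrow> bool" where
  "scattered q t S \<longleftrightarrow> linearized q S \<and>
     (\<forall>y z. y \<noteq> 0 \<longrightarrow> z \<noteq> 0 \<longrightarrow>
        poly S y / y ^ (q ^ t) = poly S z / z ^ (q ^ t) \<longrightarrow> y / z \<in> subfield_Fq q)"

end

theory Submission
  imports Defs "HOL-Computational_Algebra.Primes"
begin
lemma p5: "prime (5::nat)"
proof -
  have "\<forall>n\<in>{2..<5::nat}. \<not> n dvd 5"
  proof
    fix n :: nat assume "n \<in> {2..<5}"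
    then have "n = 2 \<or> n = 3 \<or> n = 4" by auto
    then show "\<not> n dvd 5" by auto
  qed
  then show ?thesis by (simp add: prime_nat_iff')
qed
lemma card_times_zero:
  fixes x :: "'a :: {field,finite}"
  shows "of_nat (card (UNIV :: 'a set)) * x = 0"
proof -
  have "(\<Sum>y\<in>UNIV. x + y) = of_nat (card (UNIV :: 'a set)) * x + (\<Sum>y\<in>UNIV. y)"
    by (simp add: sum.distrib)
  also have "(\<Sum>y\<in>UNIV. x + y) = (\<Sum>y\<in>UNIV. y)"
    by (rule sum.reindex_bij_witness[of _ "\<lambda>y. y - x" "\<lambda>y. x + y"]) auto
  finally show ?thesis by simp
qed

lemma char5:
  assumes "card (UNIV :: 'a::{field,finite} set) = 5 ^ 8"
  shows "CHAR('a) = 5"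
proof -
  have pos: "CHAR('a) > 0" by (rule finite_imp_CHAR_pos) simp
  have pr: "prime CHAR('a)" using prime_CHAR_semidom[OF pos] .
  have "of_nat (5^8) = (0::'a)" using card_times_zero[of "1::'a"] assms by simp
  then have "CHAR('a) dvd 5 ^ 8" by (simp only: of_nat_eq_0_iff_char_dvd)
  then have "CHAR('a) dvd 5" using pr prime_dvd_power by blast
  then show ?thesis using pr p5 by (metis primes_dvd_imp_eq)
qed

lemma field_power_card:
  fixes x :: "'a :: {field,finite}"
  shows   "x ^ card (UNIV :: 'a set) = x"
proof (cases "x = 0")
  case False
  have "x * (\<Prod>y\<in>UNIV-{0}. x * y) = x * x ^ (card (UNIV :: 'a set) - 1) * \<Prod>(UNIV-{0})"
    by (simp add: prod.distrib mult_ac)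
  also have "x * x ^ (card (UNIV :: 'a set) - 1) = x ^ Suc (card (UNIV :: 'a set) - 1)"
    by (subst power_Suc) auto
  also have "Suc (card (UNIV :: 'a set) - 1) = card (UNIV :: 'a set)"
    using finite_UNIV_card_ge_0[where ?'a = 'a] by simp
  also have "(\<Prod>y\<in>UNIV-{0}. x * y) = (\<Prod>y\<in>UNIV-{0}. y)"
    by (rule prod.reindex_bij_witness[of _ "\<lambda>y. y / x" "\<lambda>y. x * y"]) (use False in auto)
  finally show ?thesis
    by simp
qed (use finite_UNIV_card_ge_0[where ?'a = 'a] in auto)

lemma alg1: "(a::'a::field) + d*b = l*w \<Longrightarrow> b + d*a = m*W \<Longrightarrow> d^2 = -1 \<Longrightarrow> 2*a = l*w - d*m*W"
proof -
  assume h: "a + d*b = l*w" "b + d*a = m*W" "d^2 = -1"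
  have "2*a = (a + d*b) - d*(b+d*a) + a*(1 + d^2)" by (simp add: algebra_simps power2_eq_square)
  then show ?thesis using h by simp
qed

lemma half: "(2::'a::field) \<noteq> 0 \<Longrightarrow> 2*(a::'a) = l*w - d*m*W \<Longrightarrow> a = (l/2)*w - d*(m/2)*W"
proof -
  assume h: "(2::'a) \<noteq> 0" "2*a = l*w - d*m*W"
  have "a = (2*a)/2" using h(1) by simp
  also have "\<dots> = (l/2)*w - d*(m/2)*W" using h(1) unfolding h(2) by (simp add: field_simps)
  finally show ?thesis .
qed

lemma alg2: "(a::'a::field) = p*w - d*pb*W \<Longrightarrow> b = pb*W - d*p*w \<Longrightarrow> d^2 = -1 \<Longrightarrow>
   p5*a - d*pb5*b = p*(p5 - pb5)*w - d*pb*(p5+pb5)*W"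
proof -
  assume h: "a = p*w - d*pb*W" "b = pb*W - d*p*w" "d^2 = -1"
  have "p5*(p*w - d*pb*W) - d*pb5*(pb*W - d*p*w) = p*(p5 - pb5)*w - d*pb*(p5+pb5)*W + p*pb5*w*(1+d^2)"
    by (simp add: algebra_simps power2_eq_square)
  then show ?thesis using h by simp
qed

lemma alg3: "(W::'a::field) = A25*a + B25*b \<Longrightarrow> a = A*w + B*W \<Longrightarrow> b = Ab*W + Bb*w \<Longrightarrow>
   (A25*A + B25*Bb)*w + (A25*B + B25*Ab - 1)*W = 0"
  by (simp add: algebra_simps)

lemma alg5: "(d::'a::field)*d = -1 \<Longrightarrow> P*A*(p*X) + (-d)*Q*B*(-d*p*Y) = p*(P*(A*X) - Q*(B*Y))"
proof -
  assume h: "d*d = -1"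
  have "P*A*(p*X) + (-d)*Q*B*(-d*p*Y) = p*(P*(A*X)) + (d*d)*(p*(Q*(B*Y)))" by (simp add: algebra_simps)
  then show ?thesis using h by (simp add: algebra_simps)
qed

lemma alg6: "(c1::'a::field)*y + c2*Y = 0 \<Longrightarrow> c1*z + c2*Z = 0 \<Longrightarrow> c1*(y*Z - z*Y) = 0"
proof -
  assume h: "c1*y + c2*Y = 0" "c1*z + c2*Z = 0"
  have "c1*(y*Z - z*Y) = Z*(c1*y + c2*Y) - Y*(c1*z + c2*Z)" by (simp add: algebra_simps)
  then show ?thesis using h by simp
qed

lemma alg7: "(c1::'a::field)*Y + c2*y = 0 \<Longrightarrow> c1*Z + c2*z = 0 \<Longrightarrow> c1*(y*Z - z*Y) = 0"
proof -
  assume h: "c1*Y + c2*y = 0" "c1*Z + c2*z = 0"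
  have "c1*(y*Z - z*Y) = y*(c1*Z + c2*z) - z*(c1*Y + c2*y)" by (simp add: algebra_simps)
  then show ?thesis using h by simp
qed

context
  fixes dummy :: "'a::field"
  assumes fr: "\<And>a b::'a. (a+b)^5 = a^5+b^5"
  and fix8: "\<And>a::'a. a^390625 = a"
  and five: "(5::'a) = 0"
begin

lemma frk: "((a::'a)+b)^(5^k) = a^(5^k) + b^(5^k)"
  by (induction k arbitrary: a b) (simp_all add: power_mult fr)

lemma frk_neg: "(-(a::'a))^(5^k) = -(a^(5^k))"
  using frk[of "-a" a k] by (simp add: eq_neg_iff_add_eq_0)

lemma frk_minus: "((a::'a)-b)^(5^k) = a^(5^k) - b^(5^k)"
  using frk[of a "-b" k] frk_neg[of b k] by simp

lemma two5: "(2::'a)^(5^k) = 2"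
proof (induction k)
  case (Suc k)
  have "(2::'a)^5 = 2 + 6*5" by simp
  then have "(2::'a)^5 = 2" using five by simp
  then show ?case by (simp add: power_mult Suc)
qed simp

lemma two0: "(2::'a) \<noteq> 0"
proof
  assume "(2::'a) = 0"
  have "(5::'a) = 1 + 2*2" by simp
  also have "\<dots> = 1" using \<open>(2::'a) = 0\<close> by (simp only:) simp
  finally show False using five by simp
qed

lemma pw_comm: "((a::'a)^m)^n = (a^n)^m"
  by (simp add: power_mult[symmetric] mult.commute)

lemma bb: "((a::'a)^625)^625 = a"
  by (simp add: power_mult[symmetric] fix8)

lemma inj25: "(a::'a)^25 = b^25 \<Longrightarrow> a = b"
proof -
  assume h: "a^25 = b^25"
  have "a = (a^25)^15625" by (simp add: power_mult[symmetric] fix8)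
  also have "\<dots> = (b^25)^15625" using h by simp
  also have "\<dots> = b" by (simp add: power_mult[symmetric] fix8)
  finally show ?thesis .
qed

lemma fr_minus: "((a::'a)-b)^5 = a^5 - b^5"
  using frk_minus[of a b 1] by simp

lemma dk: "(d::'a)^5 = d \<Longrightarrow> d^(5^k) = d"
  by (induction k) (simp_all add: power_mult)


lemma step1:
  fixes w l d :: 'a
  assumes d2: "d^2 = -1" and d5: "d^5 = d" and S: "w^5 + d*w^3125 = l*w"
  shows "w^5 = (l/2)*w - d*(l/2)^625 * w^625"
proof -
  have E1: "w^5 + d*(w^625)^5 = l*w" using S by (simp add: power_mult[symmetric])
  have "(w^5 + d*w^3125)^625 = (l*w)^625" using S by simp
  moreover have "(w^5 + d*w^3125)^625 = (w^5)^625 + d^625*(w^3125)^625"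
    using frk[of "w^5" "d*w^3125" 4] by (simp add: power_mult_distrib)
  moreover have "(w^5)^625 = (w^625)^5" by (rule pw_comm)
  moreover have "d^625 = d" using dk[OF d5, of 4] by simp
  moreover have "(w^3125)^625 = w^5"
  proof -
    have "(w^3125)^625 = (w^390625)^5" by (simp add: power_mult[symmetric])
    then show ?thesis by (simp add: fix8)
  qed
  ultimately have E2: "(w^625)^5 + d*w^5 = l^625 * w^625" by (simp add: power_mult_distrib)
  have "2*w^5 = l*w - d*l^625*w^625" by (rule alg1[OF E1 E2 d2])
  then have h: "w^5 = (l/2)*w - d*(l^625/2)*w^625" by (rule half[OF two0])
  have n4: "(5::nat)^4 = 625" by simp
  have h2: "(2::'a)^625 = 2" using two5[of 4] by (simp only: n4)
  have "(l/2)^625 = l^625/2" by (simp only: power_divide h2)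
  then show ?thesis using h by simp
qed

lemma step3:
  fixes w p d :: 'a
  assumes d5: "d^5 = d" and e: "w^5 = p*w - d*p^625*w^625"
  shows "(w^625)^5 = p^625*w^625 - d*p*w"
proof -
  have "(w^5)^625 = (p*w - d*p^625*w^625)^625" using e by simp
  also have "\<dots> = p^625*w^625 - d^625*(p^625)^625*(w^625)^625"
    using frk_minus[of "p*w" "d*p^625*w^625" 4] by (simp add: power_mult_distrib)
  also have "\<dots> = p^625*w^625 - d*p*w" using dk[OF d5, of 4] bb by simp
  finally show ?thesis by (simp add: pw_comm)
qed


lemma step25:
  fixes w W p pb d :: 'a
  assumes d2: "d^2 = -1" and d5: "d^5 = d"
  and e1: "w^5 = p*w - d*pb*W" and e2: "W^5 = pb*W - d*p*w"
  shows "w^25 = p*(p^5 - pb^5)*w - d*pb*(p^5+pb^5)*W"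
proof -
  have "w^25 = (w^5)^5" by (simp add: power_mult[symmetric])
  also have "\<dots> = (p*w - d*pb*W)^5" using e1 by simp
  also have "\<dots> = p^5*w^5 - d*pb^5*W^5" using fr_minus d5 by (simp add: power_mult_distrib)
  also have "\<dots> = p*(p^5 - pb^5)*w - d*pb*(p^5+pb^5)*W"
    by (rule alg2[OF e1 e2 d2])
  finally show ?thesis .
qed


lemma step625:
  fixes w W A B Ab Bb :: 'a
  assumes e1: "w^25 = A*w + B*W" and e2: "W^25 = Ab*W + Bb*w" and wW: "w^625 = W"
  shows "(A^25*A + B^25*Bb)*w + (A^25*B + B^25*Ab - 1)*W = 0"
proof -
  have "W = (w^25)^25" using wW by (simp add: power_mult[symmetric])
  also have "\<dots> = (A*w + B*W)^25" using e1 by simp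
  also have "\<dots> = A^25*w^25 + B^25*W^25"
    using frk[of "A*w" "B*W" 2] by (simp add: power_mult_distrib)
  finally have "W = A^25*w^25 + B^25*W^25" .
  from alg3[OF this e1 e2] show ?thesis .
qed

lemma step25':
  fixes w W p pb d :: 'a
  assumes d2: "d^2 = -1" and d5: "d^5 = d"
  and e1: "w^5 = p*w - d*pb*W" and e2: "W^5 = pb*W - d*p*w"
  shows "w^25 = (p*(p^5 - pb^5))*w + (-d*pb*(p^5+pb^5))*W"
  using step25[OF d2 d5 e1 e2] by simp

lemma negd: "(d::'a)^5 = d \<Longrightarrow> (-d)^25 = -d"
  using frk_neg[of d 2] dk[of d 2] by simp

lemma final_contra:
  fixes p pb d :: 'a
  assumes d2: "d^2 = -1" and d5: "d^5 = d" and p0: "p \<noteq> 0" and pb0: "pb \<noteq> 0"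
  and c1: "(p*(p^5 - pb^5))^25 * (p*(p^5 - pb^5)) + (-d*pb*(p^5+pb^5))^25 * (-d*p*(pb^5+p^5)) = 0"
  and c1': "(pb*(pb^5 - p^5))^25 * (pb*(pb^5 - p^5)) + (-d*p*(pb^5+p^5))^25 * (-d*pb*(p^5+pb^5)) = 0"
  shows False
proof -
  define s where "s = p^5"
  define sb where "sb = pb^5"
  define X where "X = s - sb"
  define Y where "Y = s + sb"
  define U where "U = X^25*X"
  define V where "V = Y^25*Y"
  define P where "P = p^25"
  define Q where "Q = pb^25"
  have nd: "(-d)^25 = -d" using negd[OF d5] .
  have dd: "d*d = -1" using d2 by (simp add: power2_eq_square)
  have a1: "(p*X)^25 = P * X^25" unfolding P_def by (simp only: power_mult_distrib)
  have a2: "(-d*pb*(p^5+pb^5))^25 = -d * Q * Y^25" unfolding Q_def Y_def s_def sb_def using nd by (simp only: power_mult_distrib)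
  have a3: "-d*p*(pb^5+p^5) = -d*p*Y" unfolding Y_def s_def sb_def by (simp add: add.commute)
  have a4: "p*(p^5 - pb^5) = p*X" unfolding X_def s_def sb_def by simp
  have "P*X^25*(p*X) + (-d)*Q*Y^25*(-d*p*Y) = 0" using c1 by (simp only: a4 a1 a2 a3)
  then have "p*(P*(X^25*X) - Q*(Y^25*Y)) = 0" using alg5[OF dd] by simp
  then have E1: "P*U = Q*V" using p0 unfolding U_def V_def by simp
  have XX: "(sb - s)^25*(sb - s) = U"
  proof -
    have "sb - s = -X" unfolding X_def by simp
    then show ?thesis unfolding U_def by simp
  qed
  have b1: "(pb*(sb - s))^25 = Q * (sb - s)^25" unfolding Q_def by (simp only: power_mult_distrib)
  have b2: "(-d*p*(pb^5+p^5))^25 = -d * P * Y^25" unfolding P_def Y_def s_def sb_def using nd by (simp add: power_mult_distrib add.commute)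
  have b3: "-d*pb*(p^5+pb^5) = -d*pb*Y" unfolding Y_def s_def sb_def by simp
  have b4: "pb*(pb^5 - p^5) = pb*(sb - s)" unfolding s_def sb_def by simp
  have "Q*(sb - s)^25*(pb*(sb - s)) + (-d)*P*Y^25*(-d*pb*Y) = 0" using c1' by (simp only: b4 b1 b2 b3)
  then have "pb*(Q*((sb - s)^25*(sb - s)) - P*(Y^25*Y)) = 0" using alg5[OF dd] by simp
  then have E2: "Q*U = P*V" using pb0 XX unfolding V_def by simp
  have P0: "P \<noteq> 0" unfolding P_def using p0 by simp
  have Q0: "Q \<noteq> 0" unfolding Q_def using pb0 by simp
  have UV: "U = 0 \<and> V = 0"
  proof (cases "P = Q")
    case True
    then have "p = pb" unfolding P_def Q_def by (rule inj25)
    then have "X = 0" unfolding X_def s_def sb_def by simp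
    then have "U = 0" unfolding U_def by simp
    then show ?thesis using E1 Q0 by simp
  next
    case False
    show ?thesis
    proof (cases "P = -Q")
      case True
      then have "p^25 = (-pb)^25" unfolding P_def Q_def by simp
      then have "p = -pb" by (rule inj25)
      then have "Y = 0" unfolding Y_def s_def sb_def by simp
      then have "V = 0" unfolding V_def by simp
      then show ?thesis using E1 P0 by simp
    next
      case False2: False
      have "(P - Q)*(U + V) = 0" using E1 E2 by (simp add: algebra_simps)
      then have a: "U + V = 0" using False by simp
      have "(P + Q)*(U - V) = 0" using E1 E2 by (simp add: algebra_simps)
      then have b: "U - V = 0" using False2 by (simp add: eq_neg_iff_add_eq_0)
      have "2*U = (U+V) + (U-V)" by simp
      then have "2*U = 0" using a b by simp
      then have "U = 0" using two0 by simp
      then show ?thesis using b by simp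
    qed
  qed
  then have "X = 0" "Y = 0" unfolding U_def V_def by simp_all
  then have "2*s = 0" unfolding X_def Y_def by (simp add: algebra_simps)
  then have "s = 0" using two0 by simp
  then show False unfolding s_def using p0 by simp
qed

lemma core:
  fixes y z l d :: 'a
  assumes d2: "d^2 = -1" and d5: "d^5 = d" and y0: "y \<noteq> 0" and z0: "z \<noteq> 0"
  and Sy: "y^5 + d*y^3125 = l*y" and Sz: "z^5 + d*z^3125 = l*z"
  shows "(y/z)^5 = y/z"
proof -
  define p where "p = l/2"
  define pb where "pb = p^625"
  define Y where "Y = y^625"
  define Z where "Z = z^625"
  have ey: "y^5 = p*y - d*pb*Y" using step1[OF d2 d5 Sy] unfolding p_def pb_def Y_def .
  have ez: "z^5 = p*z - d*pb*Z" using step1[OF d2 d5 Sz] unfolding p_def pb_def Z_def .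
  have eY: "Y^5 = pb*Y - d*p*y" using step3[OF d5 ey[unfolded pb_def Y_def]] unfolding pb_def Y_def .
  have eZ: "Z^5 = pb*Z - d*p*z" using step3[OF d5 ez[unfolded pb_def Z_def]] unfolding pb_def Z_def .
  have p0: "p \<noteq> 0"
  proof
    assume "p = 0"
    then have "y^5 = 0" using ey unfolding pb_def by simp
    then show False using y0 by simp
  qed
  have pb0: "pb \<noteq> 0" unfolding pb_def using p0 by simp
  have l0: "l \<noteq> 0" using p0 unfolding p_def by simp
  have Y0: "Y \<noteq> 0" unfolding Y_def using y0 by simp
  have Z0: "Z \<noteq> 0" unfolding Z_def using z0 by simp
  have yY: "y^625 = Y" unfolding Y_def ..
  have Yy: "Y^625 = y" unfolding Y_def by (rule bb)
  have zZ: "z^625 = Z" unfolding Z_def ..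
  have Zz: "Z^625 = z" unfolding Z_def by (rule bb)
  note y25 = step25'[OF d2 d5 ey eY]
  note Y25 = step25'[OF d2 d5 eY ey]
  note z25 = step25'[OF d2 d5 ez eZ]
  note Z25 = step25'[OF d2 d5 eZ ez]
  note cy = step625[OF y25 Y25 yY]
  note cY = step625[OF Y25 y25 Yy]
  note cz = step625[OF z25 Z25 zZ]
  note cZ = step625[OF Z25 z25 Zz]
  show ?thesis
  proof (cases "y*Z = z*Y")
    case True
    define t where "t = y/z"
    have yt: "y = t*z" unfolding t_def using z0 by simp
    have Yt: "Y = t^625*Z" unfolding Y_def Z_def using yt by (simp add: power_mult_distrib)
    have "t*(z*Z) = t^625*(z*Z)" using True yt Yt by (simp add: algebra_simps)
    then have tt: "t^625 = t" using z0 Z0 by simp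
    have e1: "y^5 + d*Y^5 = l*y" using Sy unfolding Y_def by (simp add: power_mult[symmetric])
    have e2: "z^5 + d*Z^5 = l*z" using Sz unfolding Z_def by (simp add: power_mult[symmetric])
    have e3: "Y^5 = t^5*Z^5" using Yt tt by (simp add: power_mult_distrib)
    have e4: "t^5*(z^5 + d*Z^5) = y^5 + d*Y^5" unfolding e3 yt by (simp add: power_mult_distrib algebra_simps)
    have "t^5*(l*z) = t^5*(z^5 + d*Z^5)" using e2 by simp
    also have "\<dots> = l*y" using e4 e1 by simp
    also have "\<dots> = t*(l*z)" using yt by simp
    finally have "t^5*(l*z) = t*(l*z)" .
    then have "t^5 = t" using l0 z0 by simp
    then show ?thesis unfolding t_def .
  next
    case False
    let ?c1 = "(p*(p^5 - pb^5))^25 * (p*(p^5 - pb^5)) + (-d*pb*(p^5+pb^5))^25 * (-d*p*(pb^5+p^5))"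
    let ?c1' = "(pb*(pb^5 - p^5))^25 * (pb*(pb^5 - p^5)) + (-d*p*(pb^5+p^5))^25 * (-d*pb*(p^5+pb^5))"
    have D0: "y*Z - z*Y \<noteq> 0" using False by simp
    have "?c1 * (y*Z - z*Y) = 0" 
      by (rule alg6[OF cy cz])
    then have c1: "?c1 = 0" using D0 by simp
    have "?c1' * (y*Z - z*Y) = 0" 
      by (rule alg7[OF cY cZ])
    then have c1': "?c1' = 0" using D0 by simp
    show ?thesis using final_contra[OF d2 d5 p0 pb0 c1 c1'] ..
  qed
qed

end
theorem mainTheorem12:
  fixes \<delta> :: "'a::{field,finite}"
  assumes "card (UNIV :: 'a set) = 5 ^ 8"
    and "\<delta> \<noteq> 0" and "\<delta> \<noteq> 1" and "\<delta> \<noteq> -1"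
    and "\<delta> ^ 4 = 1"
  shows "scattered 5 0 (monom 1 5 + monom \<delta> (5 ^ 5))"
proof -
  have ch: "CHAR('a) = 5" by (rule char5[OF assms(1)])
  have pr: "prime CHAR('a)" using ch p5 by simp
  have fr: "\<And>a b::'a. (a+b)^5 = a^5+b^5" using freshmans_dream[OF pr] ch by simp
  have fix8: "\<And>a::'a. a^390625 = a" using field_power_card[where 'a='a] assms(1) by simp
  have five: "(5::'a) = 0" using of_nat_CHAR[where 'a='a] ch by simp
  have d5: "\<delta>^5 = \<delta>" using power_Suc2[of \<delta> 4] assms(5) by simp
  have "(\<delta>^2 - 1)*(\<delta>^2 + 1) = 0" using assms(5) by (simp add: algebra_simps power2_eq_square power4_eq_xxxx)
  moreover have "\<delta>^2 \<noteq> 1"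
  proof
    assume "\<delta>^2 = 1"
    then have "(\<delta> - 1)*(\<delta> + 1) = 0" by (simp add: algebra_simps power2_eq_square)
    then show False using assms(3,4) by (simp add: eq_neg_iff_add_eq_0)
  qed
  ultimately have d2: "\<delta>^2 = -1" by (simp add: eq_neg_iff_add_eq_0)
  have lin: "linearized 5 (monom 1 5 + monom \<delta> (5 ^ 5))"
    unfolding linearized_def
  proof (intro allI impI)
    fix k assume "coeff (monom 1 5 + monom \<delta> (5 ^ 5)) k \<noteq> (0::'a)"
    then have "k = 5 \<or> k = 5^5" by (auto simp: coeff_monom split: if_splits)
    then show "\<exists>i. k = 5 ^ i" by (metis power_one_right)
  qed
  have ev: "\<And>x. poly (monom 1 5 + monom \<delta> (5 ^ 5)) x = x^5 + \<delta>*x^3125"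
    by (simp add: poly_monom)
  show ?thesis
    unfolding scattered_def
  proof (intro conjI lin allI impI)
    fix y z :: 'a
    assume y0: "y \<noteq> 0" and z0: "z \<noteq> 0"
      and h: "poly (monom 1 5 + monom \<delta> (5 ^ 5)) y / y ^ 5 ^ 0 =
           poly (monom 1 5 + monom \<delta> (5 ^ 5)) z / z ^ 5 ^ 0"
    define l where "l = (y^5 + \<delta>*y^3125)/y"
    have Sy: "y^5 + \<delta>*y^3125 = l*y" unfolding l_def using y0 by simp
    have "(z^5 + \<delta>*z^3125)/z = l" using h unfolding l_def ev by simp
    then have Sz: "z^5 + \<delta>*z^3125 = l*z" using z0 by (simp add: field_simps)
    have "(y/z)^5 = y/z" by (rule core[OF fr fix8 five d2 d5 y0 z0 Sy Sz])
    then show "y / z \<in> subfield_Fq 5" unfolding subfield_Fq_def by simp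
  qed
qed
end
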